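(* Let $\Lambda\subset\mathbb Z^n$ be a sublattice with a basis $S=\{v_1,\ldots,v_n\}$ which is non-acute. Let $k_1,\ldots,k_n$ be the unique integers with $W:=\sum_{i=1}^n v_i=\sum_{i=1}^n k_ie_i$, and let $R_o=\{i : k_i\equiv 1 \pmod 2\}$. If $$\sum_{i=1}^n k_i^2>4n-3|R_o|,$$ then $\Lambda$ is not cubiquitous.
   Context: $\mathbb Z^n$ carries the standard dot product $\langle\cdot,\cdot\rangle$ with standard basis $e_1,\ldots,e_n$. A set $S=\{v_1,\ldots,v_n\}\subset\mathbb Z^n$ is non-acute if $a_i:=\langle v_i,v_i\rangle\ge 1$ for all $i$, $\langle v_i,v_j\rangle\le 0$ for all $i\ne j$, and $a_i\ge -\sum_{j\ne i}\langle v_j,v_i\rangle$ for all $i$. A full-rank sublattice $\Lambda\subset\mathbb Z^n$ is cubiquitous if $\Lambda\cap(x+\{0,1\}^n)\ne\emptyset$ for every $x\in\mathbb Z^n$. *)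

theory Defs
  imports "HOL-Analysis.Analysis"
begin

text \<open>Integer vectors in Z^n are modelled as int^'n for a finite index type 'n (n = CARD('n)).
  A family of n vectors is a function v :: 'n \<Rightarrow> int^'n.\<close>

definition idot :: "int^'n \<Rightarrow> int^'n \<Rightarrow> int" where
  "idot x y = (\<Sum>i\<in>UNIV. x$i * y$i)"

definition non_acute :: "('n::finite \<Rightarrow> int^'n) \<Rightarrow> bool" where
  "non_acute v \<longleftrightarrow>
     (\<forall>i. idot (v i) (v i) \<ge> 1) \<and>
     (\<forall>i j. i \<noteq> j \<longrightarrow> idot (v i) (v j) \<le> 0) \<and>
     (\<forall>i. idot (v i) (v i) \<ge> - (\<Sum>j\<in>UNIV - {i}. idot (v j) (v i)))"

definition int_span :: "('n::finite \<Rightarrow> int^'n) \<Rightarrow> (int^'n) set" where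
  "int_span v = {x. \<exists>c::'n \<Rightarrow> int. x = (\<Sum>i\<in>UNIV. c i *s v i)}"

definition int_indep :: "('n::finite \<Rightarrow> int^'n) \<Rightarrow> bool" where
  "int_indep v \<longleftrightarrow> (\<forall>c::'n \<Rightarrow> int. (\<Sum>i\<in>UNIV. c i *s v i) = 0 \<longrightarrow> (\<forall>i. c i = 0))"

definition cubiquitous :: "(int^'n::finite) set \<Rightarrow> bool" where
  "cubiquitous L \<longleftrightarrow> (\<forall>x::int^'n. \<exists>y\<in>L. \<forall>i. y$i - x$i \<in> {0, 1})"

end

theory Submission
  imports Defs
begin

lemma idot_sym: "idot x y = idot y x"
  unfolding idot_def by (simp add: mult.commute)

lemma idot_lin: "idot (\<Sum>i\<in>UNIV. c i *s (v i :: int^'n::finite)) z = (\<Sum>i\<in>UNIV. c i * idot (v i) z)"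
proof -
  have "idot (\<Sum>i\<in>UNIV. c i *s v i) z = (\<Sum>k\<in>UNIV. (\<Sum>i\<in>UNIV. c i * v i $ k) * z $ k)"
    unfolding idot_def sum_component by simp
  also have "\<dots> = (\<Sum>k\<in>UNIV. \<Sum>i\<in>UNIV. c i * (v i $ k * z $ k))"
    by (simp add: sum_distrib_right mult.assoc)
  also have "\<dots> = (\<Sum>i\<in>UNIV. \<Sum>k\<in>UNIV. c i * (v i $ k * z $ k))"
    by (rule sum.swap)
  also have "\<dots> = (\<Sum>i\<in>UNIV. c i * idot (v i) z)"
    unfolding idot_def by (simp add: sum_distrib_left)
  finally show ?thesis .
qed

lemma idot_sumr: "idot x (\<Sum>j\<in>UNIV. (v j :: int^'n::finite)) = (\<Sum>j\<in>UNIV. idot x (v j))"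
proof -
  have "idot x (\<Sum>j\<in>UNIV. v j) = (\<Sum>k\<in>UNIV. \<Sum>j\<in>UNIV. x $ k * v j $ k)"
    unfolding idot_def sum_component by (simp add: sum_distrib_left)
  also have "\<dots> = (\<Sum>j\<in>UNIV. idot x (v j))" unfolding idot_def by (rule sum.swap)
  finally show ?thesis .
qed

lemma quad_form:
  fixes g :: "'n::finite \<Rightarrow> 'n \<Rightarrow> int" and c :: "'n \<Rightarrow> int"
  assumes sym: "\<And>i j. g i j = g j i"
    and off: "\<And>i j. i \<noteq> j \<Longrightarrow> g i j \<le> 0"
    and rows: "\<And>i. (\<Sum>j\<in>UNIV. g i j) \<ge> 0"
  shows "(\<Sum>i\<in>UNIV. \<Sum>j\<in>UNIV. g i j * (c i * c j - c i)) \<ge> 0"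
proof -
  have swap: "(\<Sum>i\<in>UNIV. \<Sum>j\<in>UNIV. g i j * c j ^ 2) = (\<Sum>i\<in>UNIV. \<Sum>j\<in>UNIV. g i j * c i ^ 2)"
    by (subst sum.swap) (simp add: sym)
  have "2 * (\<Sum>i\<in>UNIV. \<Sum>j\<in>UNIV. g i j * (c i * c j - c i))
      = (\<Sum>i\<in>UNIV. \<Sum>j\<in>UNIV. (- g i j) * (c i - c j)^2 + g i j * c i ^ 2 + g i j * c j ^ 2 - 2 * g i j * c i)"
    by (simp add: sum_distrib_left power2_eq_square algebra_simps)
  also have "\<dots> = (\<Sum>i\<in>UNIV. \<Sum>j\<in>UNIV. (- g i j) * (c i - c j)^2)
      + (\<Sum>i\<in>UNIV. \<Sum>j\<in>UNIV. g i j * c i ^ 2) + (\<Sum>i\<in>UNIV. \<Sum>j\<in>UNIV. g i j * c j ^ 2)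
      - (\<Sum>i\<in>UNIV. \<Sum>j\<in>UNIV. 2 * g i j * c i)"
    by (simp add: sum.distrib sum_subtractf sum_negf)
  also have "\<dots> = (\<Sum>i\<in>UNIV. \<Sum>j\<in>UNIV. (- g i j) * (c i - c j)^2)
      + 2 * (\<Sum>i\<in>UNIV. (\<Sum>j\<in>UNIV. g i j) * (c i ^ 2 - c i))"
    unfolding swap by (simp add: sum_distrib_left sum_distrib_right sum_subtractf algebra_simps)
  also have "\<dots> \<ge> 0"
  proof -
    have "(- g i j) * (c i - c j)^2 \<ge> 0" for i j
      by (cases "i = j") (auto simp: mult_nonpos_nonneg off)
    hence a: "(\<Sum>i\<in>UNIV. \<Sum>j\<in>UNIV. (- g i j) * (c i - c j)^2) \<ge> 0"
      by (intro sum_nonneg) auto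
    have "c i ^ 2 - c i \<ge> 0" for i
    proof -
      have "c i \<le> c i * c i"
      proof (cases "c i \<le> 0")
        case True thus ?thesis using zero_le_square[of "c i"] by linarith
      next
        case False thus ?thesis using mult_left_mono[of 1 "c i" "c i"] by simp
      qed
      thus ?thesis by (simp add: power2_eq_square)
    qed
    hence "(\<Sum>i\<in>UNIV. (\<Sum>j\<in>UNIV. g i j) * (c i ^ 2 - c i)) \<ge> 0"
      by (intro sum_nonneg mult_nonneg_nonneg rows)
    with a show ?thesis by simp
  qed
  finally show ?thesis by simp
qed

lemma key:
  fixes v :: "'n::finite \<Rightarrow> int^'n"
  assumes nonac: "non_acute v"
  shows "idot (\<Sum>i\<in>UNIV. c i *s v i) (\<Sum>i\<in>UNIV. c i *s v i)
       \<ge> idot (\<Sum>i\<in>UNIV. c i *s v i) (\<Sum>j\<in>UNIV. v j)"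
proof -
  define g where "g i j = idot (v i) (v j)" for i j
  have sym: "g i j = g j i" for i j unfolding g_def by (rule idot_sym)
  have off: "i \<noteq> j \<Longrightarrow> g i j \<le> 0" for i j using nonac unfolding non_acute_def g_def by blast
  have rows: "(\<Sum>j\<in>UNIV. g i j) \<ge> 0" for i
  proof -
    have "idot (v i) (v i) \<ge> - (\<Sum>j\<in>UNIV - {i}. idot (v j) (v i))"
      using nonac unfolding non_acute_def by blast
    moreover have "(\<Sum>j\<in>UNIV. g i j) = g i i + (\<Sum>j\<in>UNIV - {i}. g i j)"
      by (simp add: sum.remove)
    ultimately show ?thesis unfolding g_def by (simp add: idot_sym)
  qed
  have "idot (\<Sum>i\<in>UNIV. c i *s v i) (\<Sum>i\<in>UNIV. c i *s v i)
     = (\<Sum>i\<in>UNIV. \<Sum>j\<in>UNIV. g i j * (c i * c j))"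
  proof -
    have e: "idot (v i) (\<Sum>i\<in>UNIV. c i *s v i) = (\<Sum>j\<in>UNIV. c j * g i j)" for i
    proof -
      have "idot (v i) (\<Sum>i\<in>UNIV. c i *s v i) = idot (\<Sum>i\<in>UNIV. c i *s v i) (v i)" by (rule idot_sym)
      also have "\<dots> = (\<Sum>j\<in>UNIV. c j * g i j)" unfolding idot_lin g_def by (intro sum.cong refl) (metis idot_sym)
      finally show ?thesis .
    qed
    show ?thesis by (simp add: idot_lin e sum_distrib_left algebra_simps)
  qed
  moreover have "idot (\<Sum>i\<in>UNIV. c i *s v i) (\<Sum>j\<in>UNIV. v j)
     = (\<Sum>i\<in>UNIV. \<Sum>j\<in>UNIV. g i j * c i)"
    by (simp add: idot_sumr idot_lin g_def algebra_simps) (rule sum.swap)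
  moreover have "(\<Sum>i\<in>UNIV. \<Sum>j\<in>UNIV. g i j * (c i * c j - c i)) \<ge> 0"
    by (rule quad_form[OF sym off rows])
  ultimately show ?thesis
    by (simp add: right_diff_distrib sum_subtractf)
qed

lemma coord_bound:
  fixes y k :: int
  assumes "y - k div 2 \<in> {0, 1}"
  shows "(2 * y - k)^2 \<le> (if odd k then 1 else 4)"
proof -
  define d where "d = y - k div 2"
  have d: "d = 0 \<or> d = 1" using assms unfolding d_def by auto
  have r: "k mod 2 = 0 \<or> k mod 2 = 1" by auto
  have e: "2 * y - k = 2 * d - k mod 2" unfolding d_def by (simp add: algebra_simps minus_mod_eq_mult_div[symmetric])
  have o: "odd k \<longleftrightarrow> k mod 2 = 1" by (simp add: odd_iff_mod_2_eq_one)
  show ?thesis unfolding e o using d r by auto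
qed

theorem proposition1p4:
  fixes v :: "'n::finite \<Rightarrow> int^'n"
  assumes basis: "int_indep v"
    and nonac: "non_acute v"
    and big: "(\<Sum>i\<in>UNIV. ((\<Sum>j\<in>UNIV. v j) $ i)^2)
              > 4 * int CARD('n) - 3 * int (card {i. odd ((\<Sum>j\<in>UNIV. v j) $ i)})"
  shows "\<not> cubiquitous (int_span v)"
proof
  assume cub: "cubiquitous (int_span v)"
  define W where "W = (\<Sum>j\<in>UNIV. v j)"
  obtain y where y: "y \<in> int_span v" and yc: "\<forall>i. y$i - (\<chi> i. W $ i div 2)$i \<in> {0, 1}"
    using cub unfolding cubiquitous_def by blast
  obtain c where yd: "y = (\<Sum>i\<in>UNIV. c i *s v i)" using y unfolding int_span_def by blast
  have ge: "idot y y \<ge> idot y W" using key[OF nonac, of c] unfolding yd W_def .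
  have "(\<Sum>i\<in>UNIV. (2 * y$i - W$i)^2) \<le> (\<Sum>i\<in>UNIV. (if odd (W$i) then 1 else 4 :: int))"
    by (intro sum_mono coord_bound) (use yc in simp)
  also have "\<dots> = (\<Sum>i\<in>UNIV. 4 - 3 * (if odd (W$i) then 1 else 0 :: int))"
    by (intro sum.cong) auto
  also have "\<dots> = 4 * int CARD('n) - 3 * int (card {i. odd (W $ i)})"
    by (simp add: sum_subtractf sum_distrib_left[symmetric] sum.If_cases)
  finally have A: "(\<Sum>i\<in>UNIV. (2 * y$i - W$i)^2) \<le> 4 * int CARD('n) - 3 * int (card {i. odd (W $ i)})" .
  have "(\<Sum>i\<in>UNIV. (2 * y$i - W$i)^2) = 4 * (idot y y - idot y W) + (\<Sum>i\<in>UNIV. (W$i)^2)"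
    unfolding idot_def by (simp add: power2_eq_square algebra_simps sum.distrib sum_subtractf sum_distrib_left)
  moreover have "4 * (idot y y - idot y W) \<ge> 0" using ge by simp
  ultimately show False using A big unfolding W_def by linarith
qed

end
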